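(* Let $r\ge2$ and let $P,Q$ be a harmonious pair of $r$-patterns. Then for every $k\ge1$, the number of $\{P,Q\}$-cliques among the ordered $r$-matchings on $[rk]$ equals $k!$.
   Context: An ordered $r$-matching of size $k$ is a set of $k$ pairwise disjoint $r$-element subsets (edges) of $[rk]$ (with its natural order). An $r$-pattern is an ordered $r$-matching of size 2, written as a word over $\{A,B\}$ (each letter $r$ times, starting with $A$). Two edges form pattern $P$ if they induce a matching order-isomorphic to $P$; a $\mathcal P$-clique is an ordered matching all of whose pairs of edges form patterns in $\mathcal P$. An $r$-pattern is collectable if it splits into consecutive blocks $S_1\cdots S_s$ each of the form $A^tB^t$ or $B^tA^t$ ($t\ge1$; $W^t$ is $t$ repetitions of $W$); this splitting is unique and its composition is $(|S_1|/2,\dots,|S_s|/2)$. Two distinct collectable $r$-patterns are harmonious if they have the same composition. *)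

theory Defs
  imports Main
begin

text \<open>Words over {A,B} are bool lists: True = A, False = B.\<close>

definition ordered_matching :: "nat \<Rightarrow> nat \<Rightarrow> nat set set \<Rightarrow> bool" where
  "ordered_matching r k M \<longleftrightarrow>
     finite M \<and> card M = k \<and> (\<forall>e\<in>M. e \<subseteq> {1..r*k} \<and> card e = r) \<and> pairwise disjnt M"

definition is_pattern :: "nat \<Rightarrow> bool list \<Rightarrow> bool" where
  "is_pattern r w \<longleftrightarrow> length w = 2*r \<and> count_list w True = r \<and> count_list w False = r
      \<and> w \<noteq> [] \<and> hd w = True"

definition pattern_of :: "nat set \<Rightarrow> nat set \<Rightarrow> bool list" where
  "pattern_of e f = (let U = e \<union> f; E = (if Min U \<in> e then e else f)
                     in map (\<lambda>i. i \<in> E) (sorted_list_of_set U))"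

definition forms :: "nat set \<Rightarrow> nat set \<Rightarrow> bool list \<Rightarrow> bool" where
  "forms e f P \<longleftrightarrow> pattern_of e f = P"

definition is_clique :: "bool list set \<Rightarrow> nat set set \<Rightarrow> bool" where
  "is_clique \<P> M \<longleftrightarrow> (\<forall>e\<in>M. \<forall>f\<in>M. e \<noteq> f \<longrightarrow> (\<exists>P\<in>\<P>. forms e f P))"

definition block :: "bool \<Rightarrow> nat \<Rightarrow> bool list" where
  "block ab t = (if ab then replicate t True @ replicate t False
                else replicate t False @ replicate t True)"

definition has_composition :: "bool list \<Rightarrow> nat list \<Rightarrow> bool" where
  "has_composition w c \<longleftrightarrow> (\<forall>t\<in>set c. t \<ge> 1) \<and>
     (\<exists>os. length os = length c \<and> w = concat (map2 block os c))"

definition collectable :: "nat \<Rightarrow> bool list \<Rightarrow> bool" where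
  "collectable r w \<longleftrightarrow> is_pattern r w \<and> (\<exists>c. has_composition w c)"

definition harmonious :: "nat \<Rightarrow> bool list \<Rightarrow> bool list \<Rightarrow> bool" where
  "harmonious r P Q \<longleftrightarrow> collectable r P \<and> collectable r Q \<and> P \<noteq> Q \<and>
     (\<exists>c. has_composition P c \<and> has_composition Q c)"

end

theory Submission
  imports Defs "HOL-Combinatorics.Permutations"
begin

definition rk :: "nat set \<Rightarrow> nat \<Rightarrow> nat" where "rk S x = card {y\<in>S. y < x}"

lemma sl_nth_rk:
  assumes "finite U" "n < card U"
  shows "sorted_list_of_set U ! n \<in> U \<and> rk U (sorted_list_of_set U ! n) = n"
proof -
  let ?L = "sorted_list_of_set U"
  have sL: "sorted_wrt (<) ?L" using assms(1) by simp
  have len: "length ?L = card U" by simp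
  have dL: "distinct ?L" by simp
  have sU: "set ?L = U" using assms(1) by simp
  have mem: "?L ! n \<in> U" using assms len sU nth_mem by metis
  have "{y\<in>U. y < ?L ! n} = (\<lambda>i. ?L ! i) ` {..<n}"
  proof
    show "{y\<in>U. y < ?L ! n} \<subseteq> (\<lambda>i. ?L ! i) ` {..<n}"
    proof
      fix y assume y: "y \<in> {y\<in>U. y < ?L ! n}"
      then obtain i where i: "i < length ?L" "?L ! i = y" using sU by (metis (no_types, lifting) in_set_conv_nth mem_Collect_eq)
      have "i < n"
      proof (rule ccontr)
        assume "\<not> i < n"
        then have "n \<le> i" by simp
        then have "?L ! n \<le> ?L ! i" using sL i(1) 
          by (metis le_eq_less_or_eq nat_less_le sorted_wrt_nth_less)
        then show False using y i by simp
      qed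
      then show "y \<in> (\<lambda>i. ?L ! i) ` {..<n}" using i by auto
    qed
  next
    show "(\<lambda>i. ?L ! i) ` {..<n} \<subseteq> {y\<in>U. y < ?L ! n}"
    proof
      fix y assume "y \<in> (\<lambda>i. ?L ! i) ` {..<n}"
      then obtain i where i: "i < n" "y = ?L ! i" by auto
      then have "y < ?L ! n" using sL assms len by (metis sorted_wrt_nth_less)
      moreover have "y \<in> U" using i assms len sU by (metis less_trans nth_mem)
      ultimately show "y \<in> {y\<in>U. y < ?L ! n}" by simp
    qed
  qed
  moreover have "inj_on (\<lambda>i. ?L ! i) {..<n}" using dL assms len
    by (auto simp: inj_on_def nth_eq_iff_index_eq)
  ultimately have "rk U (?L ! n) = n" unfolding rk_def by (simp add: card_image)
  then show ?thesis using mem by simp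
qed

lemma rk_sl_nth:
  assumes "finite U" "x \<in> U"
  shows "rk U x < card U \<and> sorted_list_of_set U ! (rk U x) = x"
proof -
  obtain n where n: "n < length (sorted_list_of_set U)" "sorted_list_of_set U ! n = x"
    using assms by (metis in_set_conv_nth set_sorted_list_of_set)
  then have "n < card U" by simp
  with sl_nth_rk[OF assms(1) this] n show ?thesis by simp
qed

lemma rk_less_card: "finite S \<Longrightarrow> x \<in> S \<Longrightarrow> rk S x < card S"
  unfolding rk_def by (rule psubset_card_mono) auto

lemma rk_strict: "finite S \<Longrightarrow> x \<in> S \<Longrightarrow> x < y \<Longrightarrow> rk S x < rk S y"
proof -
  assume a: "finite S" "x \<in> S" "x < y"
  have "{z \<in> S. z < x} \<subset> {z \<in> S. z < y}"
  proof
    show "{z \<in> S. z < x} \<subseteq> {z \<in> S. z < y}" using a by auto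
    show "{z \<in> S. z < x} \<noteq> {z \<in> S. z < y}" using a by blast
  qed
  then show ?thesis unfolding rk_def using a by (intro psubset_card_mono) auto
qed

lemma rk_mono: "finite S \<Longrightarrow> x \<le> y \<Longrightarrow> rk S x \<le> rk S y"
  unfolding rk_def by (rule card_mono) auto

lemma rk_inj: "finite S \<Longrightarrow> x \<in> S \<Longrightarrow> y \<in> S \<Longrightarrow> rk S x = rk S y \<Longrightarrow> x = y"
proof (rule ccontr)
  assume a: "finite S" "x \<in> S" "y \<in> S" "rk S x = rk S y" "x \<noteq> y"
  show False
  proof (cases "x < y")
    case True
    then show False using rk_strict[OF a(1) a(2) True] a(4) by simp
  next
    case False
    then have "y < x" using a(5) by simp
    then show False using rk_strict[OF a(1) a(3) \<open>y < x\<close>] a(4) by simp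
  qed
qed

lemma rk_image:
  assumes "finite A" "a \<in> A" "\<And>x y. x \<in> A \<Longrightarrow> y \<in> A \<Longrightarrow> x < y \<Longrightarrow> h x < h y"
  shows "rk (h ` A) (h a) = rk A a"
proof -
  have inj: "inj_on h A"
  proof (rule inj_onI)
    fix x y assume "x \<in> A" "y \<in> A" "h x = h y"
    then show "x = y" using assms(3)[of x y] assms(3)[of y x] by (metis linorder_neq_iff order_less_irrefl)
  qed
  have "{y \<in> h ` A. y < h a} = h ` {x\<in>A. x < a}"
  proof
    show "{y \<in> h ` A. y < h a} \<subseteq> h ` {x\<in>A. x < a}"
    proof
      fix y assume "y \<in> {y \<in> h ` A. y < h a}"
      then obtain x where x: "x \<in> A" "y = h x" "h x < h a" by auto
      have "x < a"
      proof (rule ccontr)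
        assume "\<not> x < a"
        then have "x = a \<or> a < x" by auto
        then show False using assms(3)[OF assms(2) x(1)] x(3) by auto
      qed
      then show "y \<in> h ` {x\<in>A. x < a}" using x by auto
    qed
  qed (use assms in auto)
  moreover have "inj_on h {x\<in>A. x < a}" using inj by (rule inj_on_subset) auto
  ultimately show ?thesis unfolding rk_def by (simp add: card_image)
qed

lemma rk_lessThan: "q < n \<Longrightarrow> rk {..<n} q = q"
proof -
  assume "q < n"
  then have "{y\<in>{..<n}. y < q} = {..<q}" by auto
  then show ?thesis unfolding rk_def by simp
qed

lemma rk_atLeastAtMost: "1 \<le> x \<Longrightarrow> x \<le> N \<Longrightarrow> rk {1..N} x = x - 1"
proof -
  assume "1 \<le> x" "x \<le> N"
  then have "{y\<in>{1..N}. y < x} = {1..<x}" by auto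
  then show ?thesis unfolding rk_def by simp
qed

lemma rk_Un: "finite A \<Longrightarrow> finite B \<Longrightarrow> A \<inter> B = {} \<Longrightarrow> rk (A \<union> B) x = rk A x + rk B x"
  unfolding rk_def by (subst card_Un_disjoint[symmetric]) (auto intro: arg_cong[where f=card])

lemma rk_image_all:
  assumes "finite S"
  shows "rk S ` S = {..<card S}"
proof -
  have "rk S ` S \<subseteq> {..<card S}" using rk_less_card assms by auto
  moreover have "card (rk S ` S) = card S"
    using assms by (intro card_image inj_onI) (auto intro: rk_inj)
  ultimately show ?thesis by (metis card_lessThan card_subset_eq finite_lessThan)
qed

definition W :: "bool list \<Rightarrow> nat list \<Rightarrow> bool list" where "W os c = concat (map2 block os c)"

fun G :: "nat list \<Rightarrow> nat \<Rightarrow> nat" where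
  "G [] q = 0"
| "G (t#c) q = (if q < t then 0 else Suc (G c (q - t)))"

definition Cs :: "nat list \<Rightarrow> nat \<Rightarrow> nat" where "Cs c g = sum_list (take g c)"

definition posA :: "bool list \<Rightarrow> nat list \<Rightarrow> nat \<Rightarrow> nat" where
  "posA os c q = q + Cs c (G c q) + (if os ! (G c q) then 0 else c ! (G c q))"

lemma W_Cons: "W (b#os) (t#c) = block b t @ W os c" by (simp add: W_def)
lemma W_Nil: "W [] [] = []" by (simp add: W_def)

lemma length_block: "length (block b t) = 2*t" by (simp add: block_def)

lemma nth_block: "n < 2*t \<Longrightarrow> block b t ! n = (if b then n < t else t \<le> n)"
  by (auto simp: block_def nth_append)

lemma map_Not_block: "map Not (block b t) = block (\<not> b) t"
  by (simp add: block_def)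

lemma length_W: "length os = length c \<Longrightarrow> length (W os c) = 2 * sum_list c"
  by (induction os c rule: list_induct2) (auto simp: W_def length_block)

lemma W_Not: "length os = length c \<Longrightarrow> W (map Not os) c = map Not (W os c)"
  by (induction os c rule: list_induct2) (auto simp: W_def map_Not_block)

lemma Cs_Cons0[simp]: "Cs c 0 = 0" by (simp add: Cs_def)
lemma Cs_Cons_Suc[simp]: "Cs (t#c) (Suc g) = t + Cs c g" by (simp add: Cs_def)

lemma G_props: "q < sum_list c \<Longrightarrow> G c q < length c \<and> Cs c (G c q) \<le> q \<and> q < Cs c (G c q) + c ! (G c q)"
proof (induction c arbitrary: q)
  case Nil then show ?case by simp
next
  case (Cons t c)
  show ?case
  proof (cases "q < t")
    case True then show ?thesis by simp
  next
    case False
    then have "q - t < sum_list c" using Cons.prems by simp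
    from Cons.IH[OF this] False show ?thesis by auto
  qed
qed

lemma G_eq: "g < length c \<Longrightarrow> Cs c g \<le> q \<Longrightarrow> q < Cs c g + c ! g \<Longrightarrow> G c q = g"
proof (induction c arbitrary: g q)
  case Nil then show ?case by simp
next
  case (Cons t c)
  show ?case
  proof (cases g)
    case 0 then show ?thesis using Cons.prems by simp
  next
    case (Suc g')
    then have "g' < length c" "Cs c g' \<le> q - t" "q - t < Cs c g' + c ! g'" using Cons.prems by auto
    from Cons.IH[OF this] Suc Cons.prems show ?thesis by auto
  qed
qed

lemma Cs_Suc: "g < length c \<Longrightarrow> Cs c (Suc g) = Cs c g + c ! g"
  by (simp add: Cs_def take_Suc_conv_app_nth)

lemma Cs_mono: "g \<le> g' \<Longrightarrow> Cs c g \<le> Cs c g'"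
proof (induction c arbitrary: g g')
  case Nil then show ?case by (simp add: Cs_def)
next
  case (Cons t c)
  then show ?case
    by (cases g; cases g') (auto simp: Cs_def)
qed

lemma W_posA: "length os = length c \<Longrightarrow> q < sum_list c \<Longrightarrow> posA os c q < 2 * sum_list c \<and> W os c ! posA os c q"
proof (induction os c arbitrary: q rule: list_induct2)
  case Nil then show ?case by simp
next
  case (Cons b os t c)
  show ?case
  proof (cases "q < t")
    case True
    then have p: "posA (b#os) (t#c) q = q + (if b then 0 else t)" by (simp add: posA_def)
    have "posA (b#os) (t#c) q < 2*t" using True p by simp
    then show ?thesis using p True by (auto simp: W_Cons nth_append length_block nth_block)
  next
    case False
    then have p: "posA (b#os) (t#c) q = 2*t + posA os c (q - t)" by (simp add: posA_def)
    have "q - t < sum_list c" using Cons.prems False by simp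
    from Cons.IH[OF this] p show ?thesis by (auto simp: W_Cons nth_append length_block)
  qed
qed

lemma posA_mono:
  assumes "q < q'" "q' < sum_list c"
  shows "posA os c q < posA os c q'"
proof -
  let ?g = "G c q" and ?g' = "G c q'"
  have q: "q < sum_list c" using assms by simp
  note A = G_props[OF q] and B = G_props[OF assms(2)]
  have "?g \<le> ?g'"
  proof (rule ccontr)
    assume "\<not> ?g \<le> ?g'"
    then have "Suc ?g' \<le> ?g" by simp
    then have "Cs c (Suc ?g') \<le> Cs c ?g" by (rule Cs_mono)
    moreover have "Cs c (Suc ?g') = Cs c ?g' + c ! ?g'" using B by (simp add: Cs_Suc)
    ultimately show False using A B assms by simp
  qed
  then consider "?g = ?g'" | "?g < ?g'" by linarith
  then show ?thesis
  proof cases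
    case 1 then show ?thesis using assms by (simp add: posA_def)
  next
    case 2
    then have "Cs c (Suc ?g) \<le> Cs c ?g'" by (intro Cs_mono) simp
    moreover have "Cs c (Suc ?g) = Cs c ?g + c ! ?g" using A by (simp add: Cs_Suc)
    ultimately show ?thesis using A B unfolding posA_def by auto
  qed
qed

lemma pat_intro:
  assumes fin: "finite e" "finite f" and dis: "e \<inter> f = {}"
    and ce: "card e = sum_list c" and cf: "card f = sum_list c" and len: "length os = length c"
    and he: "\<forall>x\<in>e. rk (e\<union>f) x = posA os c (rk e x)"
    and hf: "\<forall>y\<in>f. rk (e\<union>f) y = posA (map Not os) c (rk f y)"
  shows "map (\<lambda>i. i\<in>e) (sorted_list_of_set (e\<union>f)) = W os c"
proof (rule nth_equalityI)
  have cU: "card (e \<union> f) = 2 * sum_list c" using card_Un_disjoint[OF fin dis] ce cf by simp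
  then show "length (map (\<lambda>i. i\<in>e) (sorted_list_of_set (e\<union>f))) = length (W os c)"
    using length_W[OF len] by simp
  fix n assume "n < length (map (\<lambda>i. i\<in>e) (sorted_list_of_set (e\<union>f)))"
  then have n: "n < card (e \<union> f)" by simp
  let ?z = "sorted_list_of_set (e\<union>f) ! n"
  have fU: "finite (e \<union> f)" using fin by simp
  from sl_nth_rk[OF fU n] have z: "?z \<in> e \<union> f" "rk (e\<union>f) ?z = n" by auto
  show "map (\<lambda>i. i\<in>e) (sorted_list_of_set (e\<union>f)) ! n = W os c ! n"
  proof (cases "?z \<in> e")
    case True
    have "rk e ?z < sum_list c" using rk_less_card[OF fin(1) True] ce by simp
    then have "W os c ! posA os c (rk e ?z)" using W_posA[OF len] by blast
    then show ?thesis using he True z n by simp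
  next
    case False
    then have zf: "?z \<in> f" using z by simp
    have "rk f ?z < sum_list c" using rk_less_card[OF fin(2) zf] cf by simp
    moreover have len': "length (map Not os) = length c" using len by simp
    ultimately have "W (map Not os) c ! posA (map Not os) c (rk f ?z)"
      and lt: "posA (map Not os) c (rk f ?z) < 2 * sum_list c" using W_posA[OF len'] by blast+
    then have "\<not> W os c ! n" using hf zf z W_Not[OF len] length_W[OF len] by auto
    then show ?thesis using False n by simp
  qed
qed

lemma pat_elim:
  assumes fin: "finite e" "finite f" and dis: "e \<inter> f = {}"
    and ce: "card e = sum_list c" and len: "length os = length c"
    and hw: "map (\<lambda>i. i\<in>e) (sorted_list_of_set (e\<union>f)) = W os c"
    and x: "x \<in> e"
  shows "rk (e\<union>f) x = posA os c (rk e x)"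
proof -
  let ?U = "e \<union> f" and ?L = "sorted_list_of_set (e \<union> f)"
  have fU: "finite ?U" using fin by simp
  define T where "T = {n. n < length (W os c) \<and> W os c ! n}"
  have lenL: "length (W os c) = card ?U" using arg_cong[OF hw, of length] by simp
  have T1: "T = rk ?U ` e"
  proof
    show "T \<subseteq> rk ?U ` e"
    proof
      fix n assume "n \<in> T"
      then have n: "n < card ?U" "W os c ! n" using lenL by (auto simp: T_def)
      from sl_nth_rk[OF fU n(1)] have "?L ! n \<in> ?U" "rk ?U (?L ! n) = n" by auto
      moreover have "?L ! n \<in> e" using n hw[symmetric] by (simp add: nth_map)
      ultimately show "n \<in> rk ?U ` e" by force
    qed
  next
    show "rk ?U ` e \<subseteq> T"
    proof
      fix n assume "n \<in> rk ?U ` e"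
      then obtain y where y: "y \<in> e" "n = rk ?U y" by auto
      from rk_sl_nth[OF fU, of y] y have "n < card ?U" "?L ! n = y" by auto
      then show "n \<in> T" using y hw[symmetric] lenL by (auto simp: T_def)
    qed
  qed
  have mono1: "\<And>a b. a \<in> e \<Longrightarrow> b \<in> e \<Longrightarrow> a < b \<Longrightarrow> rk ?U a < rk ?U b"
    using rk_strict[OF fU] by blast
  have mono2: "\<And>a b. a \<in> {..<sum_list c} \<Longrightarrow> b \<in> {..<sum_list c} \<Longrightarrow> a < b \<Longrightarrow> posA os c a < posA os c b"
    using posA_mono by auto
  have T2: "T = posA os c ` {..<sum_list c}"
  proof -
    have sub: "posA os c ` {..<sum_list c} \<subseteq> T" using W_posA[OF len] length_W[OF len] by (auto simp: T_def)
    have "inj_on (posA os c) {..<sum_list c}" using mono2 by (metis inj_onI linorder_neq_iff order_less_irrefl)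
    then have c1: "card (posA os c ` {..<sum_list c}) = sum_list c" by (simp add: card_image)
    have "inj_on (rk ?U) e" using mono1 by (metis inj_onI linorder_neq_iff order_less_irrefl)
    then have "card T = sum_list c" using T1 ce by (simp add: card_image)
    moreover have "finite T" by (simp add: T_def)
    ultimately show ?thesis using card_subset_eq[OF _ sub] c1 by simp
  qed
  have q: "rk e x < sum_list c" using rk_less_card[OF fin(1) x] ce by simp
  have r1: "rk T (rk ?U x) = rk e x" unfolding T1 using rk_image[OF fin(1) x mono1] .
  have r2: "rk T (posA os c (rk e x)) = rk e x" unfolding T2
    using rk_image[of "{..<sum_list c}" "rk e x" "posA os c"] mono2 q rk_lessThan[OF q] by simp
  have "finite T" by (simp add: T_def)
  moreover have "rk ?U x \<in> T" using T1 x by simp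
  moreover have "posA os c (rk e x) \<in> T" using T2 q by simp
  ultimately show ?thesis using rk_inj r1 r2 by metis
qed

lemma G_mono: "q \<le> q' \<Longrightarrow> q' < sum_list c \<Longrightarrow> G c q \<le> G c q'"
proof (rule ccontr)
  assume a: "q \<le> q'" "q' < sum_list c" "\<not> G c q \<le> G c q'"
  have q: "q < sum_list c" using a by simp
  note A = G_props[OF q] and B = G_props[OF a(2)]
  have "Suc (G c q') \<le> G c q" using a by simp
  then have "Cs c (Suc (G c q')) \<le> Cs c (G c q)" by (rule Cs_mono)
  moreover have "Cs c (Suc (G c q')) = Cs c (G c q') + c ! (G c q')" using B by (simp add: Cs_Suc)
  ultimately show False using A B a by simp
qed

lemma arith_cmp:
  fixes c t t' a b :: nat
  assumes "t < c" "t' < c" "a \<noteq> b"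
  shows "c * a + t < c * b + t' \<longleftrightarrow> a < b"
proof
  assume h: "c * a + t < c * b + t'"
  show "a < b"
  proof (rule ccontr)
    assume "\<not> a < b"
    then have "Suc b \<le> a" using assms(3) by simp
    then have "c * Suc b \<le> c * a" by (rule mult_le_mono2)
    then show False using h assms by simp
  qed
next
  assume "a < b"
  then have "Suc a \<le> b" by simp
  then have "c * Suc a \<le> c * b" by (rule mult_le_mono2)
  then show "c * a + t < c * b + t'" using assms by simp
qed

lemma arith_eq:
  fixes c t t' a b :: nat
  assumes "t < c" "t' < c" "c * a + t = c * b + t'"
  shows "a = b \<and> t = t'"
proof -
  have "a = b"
  proof (rule ccontr)
    assume "a \<noteq> b"
    then consider "a < b" | "b < a" by linarith
    then show False
      using arith_cmp[OF assms(1,2)] arith_cmp[OF assms(2,1)] assms(3) \<open>a \<noteq> b\<close>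
      by (metis less_irrefl)
  qed
  then show ?thesis using assms by simp
qed

locale harm =
  fixes r k :: nat and c :: "nat list" and oP oQ :: "bool list" and j :: nat
  assumes lenP: "length oP = length c" and lenQ: "length oQ = length c"
    and cpos: "\<forall>t\<in>set c. 1 \<le> t" and sumc: "sum_list c = r"
    and jlt: "j < length c" and jD: "oP ! j \<noteq> oQ ! j"
    and oP0: "oP ! 0 = True" and oQ0: "oQ ! 0 = True"
begin

definition inD :: "nat \<Rightarrow> bool" where "inD g \<longleftrightarrow> oP ! g \<noteq> oQ ! g"

definition pos :: "nat \<Rightarrow> nat \<Rightarrow> nat \<Rightarrow> nat" where
  "pos g a b = (if inD g then (if oP ! g = oP ! j then b else k - 1 - b)
                else (if oP ! g then a else k - 1 - a))"

definition Fp :: "(nat \<Rightarrow> nat) \<Rightarrow> nat \<Rightarrow> nat" where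
  "Fp p q = k * Cs c (G c q) + c ! (G c q) * p (G c q) + (q - Cs c (G c q)) + 1"

definition Edge :: "nat \<Rightarrow> nat \<Rightarrow> nat set" where
  "Edge a b = Fp (\<lambda>g. pos g a b) ` {..<r}"

lemma c_ne: "c \<noteq> []" using jlt by auto

lemma cg_pos: "g < length c \<Longrightarrow> 1 \<le> c ! g" using cpos by auto

lemma Gq: "q < r \<Longrightarrow> G c q < length c \<and> Cs c (G c q) \<le> q \<and> q < Cs c (G c q) + c ! (G c q)"
  using G_props sumc by auto

lemma Cs_le_r: "g \<le> length c \<Longrightarrow> Cs c g \<le> r"
proof -
  assume "g \<le> length c"
  then have "Cs c g \<le> Cs c (length c)" by (rule Cs_mono)
  then show ?thesis using sumc by (simp add: Cs_def)
qed

lemma Fp_upper: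
  assumes q: "q < r" and p: "p (G c q) < k"
  shows "Fp p q \<le> k * Cs c (Suc (G c q))"
proof -
  let ?g = "G c q"
  note A = Gq[OF q]
  have "Suc (p ?g) \<le> k" using p by simp
  then have "c ! ?g * Suc (p ?g) \<le> c ! ?g * k" by (rule mult_le_mono2)
  then have "c ! ?g * p ?g + (q - Cs c ?g) + 1 \<le> c ! ?g * k" using A by (simp only: mult_Suc_right) linarith
  moreover have "Cs c (Suc ?g) = Cs c ?g + c ! ?g" using A by (simp add: Cs_Suc)
  ultimately show ?thesis unfolding Fp_def by (simp add: algebra_simps)
qed

lemma Fp_lower: "k * Cs c (G c q) < Fp p q"
  unfolding Fp_def by simp

lemma Fp_cross:
  assumes q: "q < r" "q' < r" and lt: "G c q < G c q'" and p: "p (G c q) < k"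
  shows "Fp p q < Fp p' q'"
proof -
  have "Fp p q \<le> k * Cs c (Suc (G c q))" using Fp_upper[of q p] q p by simp
  also have "\<dots> \<le> k * Cs c (G c q')" using lt by (intro mult_le_mono2 Cs_mono) simp
  also have "\<dots> < Fp p' q'" by (rule Fp_lower)
  finally show ?thesis .
qed

lemma Fp_strict:
  assumes "q < q'" "q' < r" and p: "\<And>g. g < length c \<Longrightarrow> p g < k"
  shows "Fp p q < Fp p q'"
proof -
  have "G c q \<le> G c q'" using G_mono assms sumc by simp
  then consider "G c q = G c q'" | "G c q < G c q'" by linarith
  then show ?thesis
  proof cases
    case 1
    have "Cs c (G c q) \<le> q" using Gq[of q] assms by simp
    then show ?thesis using assms 1 unfolding Fp_def by simp
  next
    case 2 then show ?thesis using Fp_cross assms Gq[of q] by simp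
  qed
qed

lemma Fp_decode:
  assumes q: "q < r" "q' < r" and p: "p (G c q) < k" and p': "p' (G c q') < k"
    and eq: "Fp p q = Fp p' q'"
  shows "q = q' \<and> p (G c q) = p' (G c q')"
proof -
  have g: "G c q = G c q'"
  proof (rule ccontr)
    assume "G c q \<noteq> G c q'"
    then consider "G c q < G c q'" | "G c q' < G c q" by linarith
    then show False
    proof cases
      case 1 then show False using Fp_cross[of q q' p p'] q p eq by simp
    next
      case 2 then show False using Fp_cross[of q' q p' p] q p' eq by simp
    qed
  qed
  let ?g = "G c q"
  note A = Gq[OF q(1)] and B = Gq[OF q(2)]
  have "c ! ?g * p ?g + (q - Cs c ?g) = c ! ?g * p' ?g + (q' - Cs c ?g)"
    using eq g unfolding Fp_def by simp
  from arith_eq[OF _ _ this] A B g have "p ?g = p' ?g" "q - Cs c ?g = q' - Cs c ?g" by auto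
  moreover have "Cs c ?g \<le> q'" using B g by simp
  moreover have "q = q'" using \<open>q - Cs c ?g = q' - Cs c ?g\<close> A \<open>Cs c ?g \<le> q'\<close> by linarith
  ultimately show ?thesis using g by simp
qed

lemma Fp_range:
  assumes q: "q < r" and p: "p (G c q) < k"
  shows "1 \<le> Fp p q \<and> Fp p q \<le> r * k"
proof -
  have "Fp p q \<le> k * Cs c (Suc (G c q))" using Fp_upper[of q p] q p by simp
  also have "\<dots> \<le> k * r" using Gq[OF q] by (intro mult_le_mono2 Cs_le_r) simp
  finally show ?thesis by (simp add: Fp_def mult.commute)
qed

lemma Fp_inj:
  assumes p: "\<And>g. g < length c \<Longrightarrow> p g < k"
  shows "inj_on (Fp p) {..<r}"
proof (rule inj_onI)
  fix x y assume "x \<in> {..<r}" "y \<in> {..<r}" "Fp p x = Fp p y"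
  then show "x = y" using Fp_decode[of x y p p] p Gq by auto
qed

lemma card_Fp: "(\<And>g. g < length c \<Longrightarrow> p g < k) \<Longrightarrow> card (Fp p ` {..<r}) = r"
  using Fp_inj by (simp add: card_image)

lemma rk_Fp_self:
  assumes p: "\<And>g. g < length c \<Longrightarrow> p g < k" and q: "q < r"
  shows "rk (Fp p ` {..<r}) (Fp p q) = q"
proof -
  have "rk (Fp p ` {..<r}) (Fp p q) = rk {..<r} q"
    by (rule rk_image) (use q Fp_strict p in auto)
  then show ?thesis using rk_lessThan[OF q] by simp
qed

lemma rk_Fp_other:
  assumes pa: "\<And>g. g < length c \<Longrightarrow> pa g < k" and pb: "\<And>g. g < length c \<Longrightarrow> pb g < k"
    and q: "q < r" and ne: "pa (G c q) \<noteq> pb (G c q)"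
  shows "rk (Fp pb ` {..<r}) (Fp pa q) = Cs c (G c q) + (if pb (G c q) < pa (G c q) then c ! (G c q) else 0)"
proof -
  let ?g = "G c q"
  let ?N = "Cs c ?g + (if pb ?g < pa ?g then c ! ?g else 0)"
  note A = Gq[OF q]
  have N: "?N \<le> r"
  proof -
    have "?N \<le> Cs c (Suc ?g)" using A by (simp add: Cs_Suc)
    also have "\<dots> \<le> r" using A by (intro Cs_le_r) simp
    finally show ?thesis .
  qed
  have key: "\<And>q'. q' < r \<Longrightarrow> (Fp pb q' < Fp pa q \<longleftrightarrow> q' < ?N)"
  proof -
    fix q' assume q': "q' < r"
    note B = Gq[OF q']
    consider "G c q' < ?g" | "G c q' = ?g" | "?g < G c q'" by linarith
    then show "Fp pb q' < Fp pa q \<longleftrightarrow> q' < ?N"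
    proof cases
      case 1
      then have "Fp pb q' < Fp pa q" using Fp_cross[of q' q pb pa] q q' pb B by simp
      moreover have "q' < ?N"
      proof -
        have "Cs c (Suc (G c q')) \<le> Cs c ?g" using 1 by (intro Cs_mono) simp
        then show ?thesis using B by (simp add: Cs_Suc)
      qed
      ultimately show ?thesis by simp
    next
      case 2
      have "Fp pb q' < Fp pa q \<longleftrightarrow>
            c ! ?g * pb ?g + (q' - Cs c ?g) < c ! ?g * pa ?g + (q - Cs c ?g)"
        using 2 unfolding Fp_def by simp
      also have "\<dots> \<longleftrightarrow> pb ?g < pa ?g"
        using arith_cmp[of "q' - Cs c ?g" "c ! ?g" "q - Cs c ?g" "pb ?g" "pa ?g"] A B 2 ne by auto
      also have "\<dots> \<longleftrightarrow> q' < ?N" using A B 2 by auto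
      finally show ?thesis .
    next
      case 3
      then have "Fp pa q < Fp pb q'" using Fp_cross[of q q' pa pb] q q' pa A by simp
      moreover have "\<not> q' < ?N"
      proof -
        have "Cs c (Suc ?g) \<le> Cs c (G c q')" using 3 by (intro Cs_mono) simp
        then show ?thesis using B A by (simp add: Cs_Suc)
      qed
      ultimately show ?thesis by simp
    qed
  qed
  have "{y \<in> Fp pb ` {..<r}. y < Fp pa q} = Fp pb ` {..<?N}"
  proof
    show "{y \<in> Fp pb ` {..<r}. y < Fp pa q} \<subseteq> Fp pb ` {..<?N}"
      using key by auto
    show "Fp pb ` {..<?N} \<subseteq> {y \<in> Fp pb ` {..<r}. y < Fp pa q}"
      using key N by auto
  qed
  moreover have "inj_on (Fp pb) {..<?N}" using Fp_inj[of pb] pb N by (rule_tac inj_on_subset) auto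
  ultimately show ?thesis unfolding rk_def by (simp add: card_image)
qed

end

lemma pattern_of_sym:
  assumes "e \<inter> f = {}" "finite e" "finite f" "e \<noteq> {}"
  shows "pattern_of e f = pattern_of f e"
proof -
  have U: "f \<union> e = e \<union> f" by auto
  have "Min (e \<union> f) \<in> e \<union> f" using assms by (intro Min_in) auto
  then show ?thesis unfolding pattern_of_def Let_def U using assms by auto
qed

lemma pattern_of_first:
  assumes "Min (e \<union> f) \<in> e"
  shows "pattern_of e f = map (\<lambda>i. i \<in> e) (sorted_list_of_set (e \<union> f))"
  unfolding pattern_of_def Let_def using assms by simp

lemma Min_rk0:
  assumes "finite U" "x \<in> U" "rk U x = 0"
  shows "Min U = x"
proof -
  have m: "Min U \<in> U" "Min U \<le> x" using assms by (auto intro: Min_in)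
  show ?thesis
  proof (rule ccontr)
    assume "Min U \<noteq> x"
    then have "Min U < x" using m by simp
    then have "rk U (Min U) < rk U x" using rk_strict[OF assms(1) m(1)] by simp
    then show False using assms by simp
  qed
qed

context harm begin

lemma r_pos: "1 \<le> r"
proof -
  have "c ! 0 \<le> sum_list c" using c_ne by (simp add: elem_le_sum_list)
  then show ?thesis using cg_pos[of 0] c_ne sumc by simp
qed

lemma G0: "G c 0 = 0"
  using G_eq[of 0 c 0] cg_pos[of 0] c_ne by simp

lemma not_inD0: "\<not> inD 0" using oP0 oQ0 by (simp add: inD_def)

lemma pos0: "pos 0 a b = a" using not_inD0 oP0 by (simp add: pos_def)
lemma posj: "pos j a b = b" using jD by (simp add: pos_def inD_def)

lemma pos_lt: "a < k \<Longrightarrow> b < k \<Longrightarrow> pos g a b < k"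
  by (auto simp: pos_def)

lemma perm_lt: "\<pi> permutes {..<k} \<Longrightarrow> a < k \<Longrightarrow> \<pi> a < k"
  using permutes_in_image[of \<pi> "{..<k}" a] by simp

lemma pos_inj:
  assumes p: "\<pi> permutes {..<k}" and a: "a < k" "a' < k"
    and eq: "pos g a (\<pi> a) = pos g a' (\<pi> a')"
  shows "a = a'"
proof -
  have l: "\<pi> a < k" "\<pi> a' < k" using perm_lt[OF p] a by auto
  have "\<pi> a = \<pi> a' \<Longrightarrow> a = a'" using permutes_inj[OF p] by (meson injD)
  then show ?thesis using eq l a unfolding pos_def by (auto split: if_splits)
qed

definition Psi :: "(nat \<Rightarrow> nat) \<Rightarrow> nat set set" where
  "Psi \<pi> = (\<lambda>a. Edge a (\<pi> a)) ` {..<k}"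

lemma pos_fun_lt: "a < k \<Longrightarrow> b < k \<Longrightarrow> (\<And>g. g < length c \<Longrightarrow> pos g a b < k)"
  using pos_lt by blast

lemma Edge_sub: "a < k \<Longrightarrow> b < k \<Longrightarrow> Edge a b \<subseteq> {1..r*k}"
  unfolding Edge_def using Fp_range pos_lt by fastforce

lemma Edge_card: "a < k \<Longrightarrow> b < k \<Longrightarrow> card (Edge a b) = r"
  unfolding Edge_def by (rule card_Fp) (rule pos_lt)

lemma Edge_ne: "a < k \<Longrightarrow> b < k \<Longrightarrow> Edge a b \<noteq> {}"
  using Edge_card r_pos by fastforce

lemma Edge_disj:
  assumes p: "\<pi> permutes {..<k}" and a: "a < k" "a' < k" "a \<noteq> a'"
  shows "Edge a (\<pi> a) \<inter> Edge a' (\<pi> a') = {}"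
proof (rule ccontr)
  assume "Edge a (\<pi> a) \<inter> Edge a' (\<pi> a') \<noteq> {}"
  then obtain q q' where q: "q < r" "q' < r"
    and eq: "Fp (\<lambda>g. pos g a (\<pi> a)) q = Fp (\<lambda>g. pos g a' (\<pi> a')) q'"
    unfolding Edge_def by auto
  have l: "\<pi> a < k" "\<pi> a' < k" using perm_lt[OF p] a by auto
  from Fp_decode[OF q _ _ eq] pos_lt l a
  have "q = q'" "pos (G c q) a (\<pi> a) = pos (G c q') a' (\<pi> a')" by auto
  then have "a = a'" using pos_inj[OF p a(1,2)] by simp
  then show False using a by simp
qed

lemma Psi_card:
  assumes p: "\<pi> permutes {..<k}"
  shows "card (Psi \<pi>) = k"
proof -
  have "inj_on (\<lambda>a. Edge a (\<pi> a)) {..<k}"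
  proof (rule inj_onI)
    fix a a' assume a: "a \<in> {..<k}" "a' \<in> {..<k}" "Edge a (\<pi> a) = Edge a' (\<pi> a')"
    show "a = a'"
    proof (rule ccontr)
      assume "a \<noteq> a'"
      then have "Edge a (\<pi> a) \<inter> Edge a' (\<pi> a') = {}" using Edge_disj[OF p] a by auto
      then show False using a Edge_ne perm_lt[OF p] by auto
    qed
  qed
  then show ?thesis unfolding Psi_def by (simp add: card_image)
qed

lemma Edge_pattern:
  assumes p: "\<pi> permutes {..<k}" and ab: "a < b" "b < k"
  shows "pattern_of (Edge a (\<pi> a)) (Edge b (\<pi> b)) \<in> {W oP c, W oQ c}"
proof -
  have a: "a < k" using ab by simp
  have l: "\<pi> a < k" "\<pi> b < k" using perm_lt[OF p] ab by auto
  have ne: "\<pi> a \<noteq> \<pi> b" using permutes_inj[OF p] ab by (metis injD less_irrefl)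
  define pa where "pa = (\<lambda>g. pos g a (\<pi> a))"
  define pb where "pb = (\<lambda>g. pos g b (\<pi> b))"
  define ow where "ow = (if ((\<pi> a < \<pi> b) = oP ! j) then oP else oQ)"
  have leno: "length ow = length c" using lenP lenQ by (simp add: ow_def)
  have pal: "\<And>g. g < length c \<Longrightarrow> pa g < k" using pos_lt a l by (simp add: pa_def)
  have pbl: "\<And>g. g < length c \<Longrightarrow> pb g < k" using pos_lt ab l by (simp add: pb_def)
  have pne: "\<And>g. pa g \<noteq> pb g"
    using pos_inj[OF p a ab(2)] ab by (auto simp: pa_def pb_def)
  have og: "\<And>g. ow ! g = (pa g < pb g)"
  proof -
    fix g
    show "ow ! g = (pa g < pb g)"
      using ab l ne jD unfolding ow_def pa_def pb_def pos_def inD_def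
      by (cases "oP ! g"; cases "oQ ! g"; cases "oP ! j"; cases "\<pi> a < \<pi> b") auto
  qed
  define e where "e = Edge a (\<pi> a)"
  define f where "f = Edge b (\<pi> b)"
  have e_def': "e = Fp pa ` {..<r}" by (simp add: e_def Edge_def pa_def)
  have f_def': "f = Fp pb ` {..<r}" by (simp add: f_def Edge_def pb_def)
  have fin: "finite e" "finite f" by (simp_all add: e_def' f_def')
  have dis: "e \<inter> f = {}" using Edge_disj[OF p a ab(2)] ab by (simp add: e_def f_def)
  have ce: "card e = sum_list c" "card f = sum_list c" using card_Fp pal pbl sumc by (simp_all add: e_def' f_def')
  have he: "\<forall>x\<in>e. rk (e\<union>f) x = posA ow c (rk e x)"
  proof
    fix x assume "x \<in> e"
    then obtain q where q: "q < r" "x = Fp pa q" by (auto simp: e_def')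
    have "rk e x = q" using rk_Fp_self[of pa q] pal q by (simp add: e_def')
    moreover have "rk f x = Cs c (G c q) + (if pb (G c q) < pa (G c q) then c ! (G c q) else 0)"
      using rk_Fp_other[of pa pb q] pal pbl q pne by (simp add: f_def')
    ultimately show "rk (e\<union>f) x = posA ow c (rk e x)"
      using rk_Un[OF fin dis] og pne[of "G c q"] unfolding posA_def by auto
  qed
  have hf: "\<forall>y\<in>f. rk (e\<union>f) y = posA (map Not ow) c (rk f y)"
  proof
    fix y assume "y \<in> f"
    then obtain q where q: "q < r" "y = Fp pb q" by (auto simp: f_def')
    have g: "G c q < length c" using Gq[OF q(1)] by simp
    have "rk f y = q" using rk_Fp_self[of pb q] pbl q by (simp add: f_def')
    moreover have "rk e y = Cs c (G c q) + (if pa (G c q) < pb (G c q) then c ! (G c q) else 0)"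
      using rk_Fp_other[of pb pa q] pal pbl q pne[of "G c q"] by (simp add: e_def')
    ultimately show "rk (e\<union>f) y = posA (map Not ow) c (rk f y)"
      using rk_Un[OF fin dis] og g leno unfolding posA_def by auto
  qed
  have pat: "map (\<lambda>i. i\<in>e) (sorted_list_of_set (e\<union>f)) = W ow c"
    by (rule pat_intro[OF fin dis ce leno he hf])
  have x0: "Fp pa 0 \<in> e" using r_pos by (auto simp: e_def')
  have "rk e (Fp pa 0) = 0" using rk_Fp_self[of pa 0] pal r_pos by (simp add: e_def')
  then have "rk (e\<union>f) (Fp pa 0) = posA ow c 0" using he x0 by simp
  also have "\<dots> = 0" using og[of 0] ab unfolding posA_def G0 pa_def pb_def pos0 by simp
  finally have "Min (e \<union> f) = Fp pa 0" using Min_rk0[of "e\<union>f"] fin x0 by simp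
  then have "Min (e \<union> f) \<in> e" using x0 by simp
  then have "pattern_of e f = W ow c" using pattern_of_first pat by simp
  then show ?thesis by (simp add: e_def f_def ow_def)
qed

lemma Psi_good:
  assumes p: "\<pi> permutes {..<k}"
  shows "ordered_matching r k (Psi \<pi>) \<and> is_clique {W oP c, W oQ c} (Psi \<pi>)"
proof
  show "ordered_matching r k (Psi \<pi>)"
    unfolding ordered_matching_def
  proof (intro conjI)
    show "finite (Psi \<pi>)" by (simp add: Psi_def)
    show "card (Psi \<pi>) = k" by (rule Psi_card[OF p])
    show "\<forall>e\<in>Psi \<pi>. e \<subseteq> {1..r * k} \<and> card e = r"
      using Edge_sub Edge_card perm_lt[OF p] by (auto simp: Psi_def)
    show "pairwise disjnt (Psi \<pi>)"
      unfolding pairwise_def disjnt_def Psi_def using Edge_disj[OF p] by auto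
  qed
  show "is_clique {W oP c, W oQ c} (Psi \<pi>)"
    unfolding is_clique_def forms_def
  proof (intro ballI impI)
    fix e f assume ef: "e \<in> Psi \<pi>" "f \<in> Psi \<pi>" "e \<noteq> f"
    then obtain a b where a: "a < k" "e = Edge a (\<pi> a)" and b: "b < k" "f = Edge b (\<pi> b)"
      by (auto simp: Psi_def)
    have "a \<noteq> b" using ef a b by auto
    then consider "a < b" | "b < a" by linarith
    then have "pattern_of e f \<in> {W oP c, W oQ c}"
    proof cases
      case 1 then show ?thesis using Edge_pattern[OF p 1 b(1)] a b by simp
    next
      case 2
      have "e \<inter> f = {}" using Edge_disj[OF p a(1) b(1)] 2 a b by simp
      moreover have "finite e" "finite f" "e \<noteq> {}" using a b Edge_ne by (auto simp: Edge_def)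
      ultimately have "pattern_of e f = pattern_of f e" by (rule pattern_of_sym)
      then show ?thesis using Edge_pattern[OF p 2 a(1)] a b by simp
    qed
    then show "\<exists>P\<in>{W oP c, W oQ c}. pattern_of e f = P" by auto
  qed
qed

lemma Psi_inj: "inj_on Psi {\<pi>. \<pi> permutes {..<k}}"
proof (rule inj_onI)
  fix \<pi> \<pi>' assume p: "\<pi> \<in> {\<pi>. \<pi> permutes {..<k}}" "\<pi>' \<in> {\<pi>. \<pi> permutes {..<k}}"
    and eq: "Psi \<pi> = Psi \<pi>'"
  then have p: "\<pi> permutes {..<k}" "\<pi>' permutes {..<k}" by auto
  show "\<pi> = \<pi>'"
  proof
    fix a
    show "\<pi> a = \<pi>' a"
    proof (cases "a < k")
      case False
      then show ?thesis using permutes_not_in[OF p(1)] permutes_not_in[OF p(2)] by simp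
    next
      case True
      have "Edge a (\<pi> a) \<in> Psi \<pi>'" using eq True by (auto simp: Psi_def)
      then obtain a' where a': "a' < k" "Edge a (\<pi> a) = Edge a' (\<pi>' a')" by (auto simp: Psi_def)
      have l: "\<pi> a < k" "\<pi>' a' < k" using perm_lt p True a' by auto
      have jr: "Cs c j < r"
      proof -
        have "Cs c (Suc j) \<le> r" using jlt by (intro Cs_le_r) simp
        then show ?thesis using Cs_Suc[OF jlt] cg_pos[OF jlt] by simp
      qed
      have Gj: "G c (Cs c j) = j" using G_eq[OF jlt] cg_pos[OF jlt] by simp
      have "Fp (\<lambda>g. pos g a (\<pi> a)) 0 \<in> Edge a' (\<pi>' a')" using a' r_pos by (auto simp: Edge_def)
      then obtain q' where q': "q' < r" "Fp (\<lambda>g. pos g a (\<pi> a)) 0 = Fp (\<lambda>g. pos g a' (\<pi>' a')) q'"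
        by (auto simp: Edge_def)
      from Fp_decode[OF _ q'(1) _ _ q'(2)] r_pos pos_lt True l a'(1)
      have "0 = q'" "pos (G c 0) a (\<pi> a) = pos (G c q') a' (\<pi>' a')" by auto
      then have aa: "a = a'" using G0 pos0 by simp
      have "Fp (\<lambda>g. pos g a (\<pi> a)) (Cs c j) \<in> Edge a' (\<pi>' a')" using a' jr by (auto simp: Edge_def)
      then obtain q'' where q'': "q'' < r" "Fp (\<lambda>g. pos g a (\<pi> a)) (Cs c j) = Fp (\<lambda>g. pos g a' (\<pi>' a')) q''"
        by (auto simp: Edge_def)
      from Fp_decode[OF jr q''(1) _ _ q''(2)] pos_lt True l a'(1)
      have "Cs c j = q''" "pos (G c (Cs c j)) a (\<pi> a) = pos (G c q'') a' (\<pi>' a')" by auto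
      then show ?thesis using Gj posj aa by metis
    qed
  qed
qed

end

lemma card_filter_not:
  "finite A \<Longrightarrow> card {x\<in>A. \<not> P x} = card A - card {x\<in>A. P x}"
proof -
  assume "finite A"
  have "{x\<in>A. \<not> P x} = A - {x\<in>A. P x}" by auto
  then show ?thesis using \<open>finite A\<close> by (simp add: card_Diff_subset)
qed

lemma sum_if_const:
  "finite A \<Longrightarrow> (\<Sum>x\<in>A. (if P x then (d::nat) else 0)) = d * card {x\<in>A. P x}"
  by (simp add: sum.inter_filter[symmetric])

context harm begin

definition good :: "nat set set \<Rightarrow> bool" where
  "good M \<longleftrightarrow> ordered_matching r k M \<and> is_clique {W oP c, W oQ c} M"

definition ow :: "nat set \<Rightarrow> nat set \<Rightarrow> bool list" where
  "ow e f = (if pattern_of e f = W oP c then oP else oQ)"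

definition bf :: "nat set \<Rightarrow> nat set \<Rightarrow> nat \<Rightarrow> bool" where
  "bf e f g \<longleftrightarrow> (Min f < Min e \<longleftrightarrow> ow e f ! g)"

definition pe :: "nat set set \<Rightarrow> nat set \<Rightarrow> nat \<Rightarrow> nat" where
  "pe M e g = card {f \<in> M - {e}. bf e f g}"

definition mM :: "nat set set \<Rightarrow> nat set \<Rightarrow> nat" where
  "mM M e = card {f \<in> M - {e}. Min f < Min e}"

lemma good_basic:
  assumes "good M"
  shows "finite M" "card M = k" "\<And>e. e \<in> M \<Longrightarrow> e \<subseteq> {1..r*k}"
    "\<And>e. e \<in> M \<Longrightarrow> card e = r" "\<And>e. e \<in> M \<Longrightarrow> finite e" "\<And>e. e \<in> M \<Longrightarrow> e \<noteq> {}"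
    "\<And>e f. e \<in> M \<Longrightarrow> f \<in> M \<Longrightarrow> e \<noteq> f \<Longrightarrow> e \<inter> f = {}"
    "\<And>e f. e \<in> M \<Longrightarrow> f \<in> M \<Longrightarrow> e \<noteq> f \<Longrightarrow> pattern_of e f = W (ow e f) c"
proof -
  note A = assms[unfolded good_def ordered_matching_def is_clique_def forms_def]
  show "finite M" "card M = k" "\<And>e. e \<in> M \<Longrightarrow> e \<subseteq> {1..r*k}" "\<And>e. e \<in> M \<Longrightarrow> card e = r"
    using A by auto
  show fe: "\<And>e. e \<in> M \<Longrightarrow> finite e" using A by (meson finite_atLeastAtMost finite_subset)
  show "\<And>e. e \<in> M \<Longrightarrow> e \<noteq> {}" using A r_pos by fastforce
  show "\<And>e f. e \<in> M \<Longrightarrow> f \<in> M \<Longrightarrow> e \<noteq> f \<Longrightarrow> e \<inter> f = {}"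
    using A unfolding pairwise_def disjnt_def by blast
  show "\<And>e f. e \<in> M \<Longrightarrow> f \<in> M \<Longrightarrow> e \<noteq> f \<Longrightarrow> pattern_of e f = W (ow e f) c"
  proof -
    fix e f assume ef: "e \<in> M" "f \<in> M" "e \<noteq> f"
    then have "\<exists>P\<in>{W oP c, W oQ c}. pattern_of e f = P" using A by blast
    then have "pattern_of e f = W oP c \<or> pattern_of e f = W oQ c" by simp
    then show "pattern_of e f = W (ow e f) c" unfolding ow_def by auto
  qed
qed

lemma ow_len: "length (ow e f) = length c"
  using lenP lenQ by (simp add: ow_def)

lemma k_pos: "good M \<Longrightarrow> e \<in> M \<Longrightarrow> 1 \<le> k"
  using good_basic(1,2)[of M] by (metis card_0_eq empty_iff less_one not_le)

lemma Min_ne: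
  assumes "good M" "e \<in> M" "f \<in> M" "e \<noteq> f"
  shows "Min e \<noteq> Min f"
proof -
  have "Min e \<in> e" "Min f \<in> f" using good_basic[OF assms(1)] assms by (auto intro: Min_in)
  then show ?thesis using good_basic(7)[OF assms(1-4)] by auto
qed

lemma rk_other:
  assumes g: "good M" and e: "e \<in> M" and f: "f \<in> M" "f \<noteq> e" and x: "x \<in> e"
  shows "rk f x = Cs c (G c (rk e x)) + (if bf e f (G c (rk e x)) then c ! (G c (rk e x)) else 0)"
proof -
  note B = good_basic[OF g]
  have fin: "finite e" "finite f" using B e f by auto
  have ne: "e \<noteq> {}" "f \<noteq> {}" using B e f by auto
  have dis: "e \<inter> f = {}" using B(7)[OF e f(1)] f by auto
  have ce: "card e = sum_list c" "card f = sum_list c" using B e f sumc by auto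
  have pat: "pattern_of e f = W (ow e f) c" using B(8)[OF e f(1)] f by auto
  let ?q = "rk e x"
  let ?g = "G c ?q"
  have q: "?q < r" using rk_less_card[OF fin(1) x] ce sumc by simp
  have gl: "?g < length c" using Gq[OF q] by simp
  have MinU: "Min (e \<union> f) = min (Min e) (Min f)" using fin ne by (simp add: Min.union)
  have mne: "Min e \<noteq> Min f" using Min_ne[OF g e f(1)] f by auto
  have ru: "rk (e \<union> f) x = ?q + rk f x" using rk_Un[OF fin dis] by simp
  show ?thesis
  proof (cases "Min e < Min f")
    case True
    then have "Min (e \<union> f) = Min e" using MinU by simp
    then have "Min (e \<union> f) \<in> e" using Min_in[OF fin(1) ne(1)] by simp
    then have "map (\<lambda>i. i \<in> e) (sorted_list_of_set (e \<union> f)) = W (ow e f) c"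
      using pattern_of_first pat by simp
    from pat_elim[OF fin dis ce(1) ow_len this x]
    have "rk (e \<union> f) x = posA (ow e f) c ?q" .
    then show ?thesis using ru True unfolding posA_def bf_def by auto
  next
    case False
    then have lt: "Min f < Min e" using mne by simp
    then have "Min (e \<union> f) = Min f" using MinU by simp
    then have "Min (f \<union> e) \<in> f" using Min_in[OF fin(2) ne(2)] by (simp add: Un_commute)
    then have "pattern_of f e = map (\<lambda>i. i \<in> f) (sorted_list_of_set (f \<union> e))"
      by (rule pattern_of_first)
    moreover have "pattern_of f e = pattern_of e f" using pattern_of_sym[OF _ fin(2,1) ne(2)] dis by auto
    ultimately have mf: "map (\<lambda>i. i \<in> f) (sorted_list_of_set (e \<union> f)) = W (ow e f) c"
      using pat by (simp add: Un_commute)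
    have "map (\<lambda>i. i \<in> e) (sorted_list_of_set (e \<union> f)) = map Not (map (\<lambda>i. i \<in> f) (sorted_list_of_set (e \<union> f)))"
      using dis fin by (auto simp: set_sorted_list_of_set)
    also have "\<dots> = W (map Not (ow e f)) c" using mf W_Not[OF ow_len] by simp
    finally have "map (\<lambda>i. i \<in> e) (sorted_list_of_set (e \<union> f)) = W (map Not (ow e f)) c" .
    from pat_elim[OF fin dis ce(1) _ this x] ow_len
    have "rk (e \<union> f) x = posA (map Not (ow e f)) c ?q" by simp
    then show ?thesis using ru lt gl ow_len unfolding posA_def bf_def by auto
  qed
qed

lemma Union_good: "good M \<Longrightarrow> \<Union>M = {1..r*k}"
proof -
  assume g: "good M"
  note B = good_basic[OF g]
  have sub: "\<Union>M \<subseteq> {1..r*k}" using B by auto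
  have "card (\<Union>M) = sum card M"
    by (rule card_Union_disjoint) (use B in \<open>auto simp: pairwise_def disjnt_def\<close>)
  also have "\<dots> = k * r" using B by simp
  finally have "card (\<Union>M) = card {1..r*k}" by simp
  then show ?thesis using sub by (intro card_subset_eq) auto
qed

lemma xform:
  assumes g: "good M" and e: "e \<in> M" and x: "x \<in> e"
  shows "x = Fp (pe M e) (rk e x)"
proof -
  note B = good_basic[OF g]
  let ?q = "rk e x"
  let ?g = "G c ?q"
  have fe: "finite e" using B e by auto
  have q: "?q < r" using rk_less_card[OF fe x] B e by simp
  note A = Gq[OF q]
  have xr: "x \<in> {1..r*k}" using B(3)[OF e] x by blast
  have "x - 1 = rk (\<Union>M) x" using Union_good[OF g] xr rk_atLeastAtMost by simp
  also have "\<dots> = card (\<Union>f\<in>M. {y\<in>f. y < x})" unfolding rk_def by (rule arg_cong[where f=card]) auto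
  also have "\<dots> = (\<Sum>f\<in>M. rk f x)" unfolding rk_def
  proof (rule card_UN_disjoint)
    show "finite M" using B by simp
    show "\<forall>i\<in>M. finite {y \<in> i. y < x}" using B by simp
    show "\<forall>i\<in>M. \<forall>j\<in>M. i \<noteq> j \<longrightarrow> {y \<in> i. y < x} \<inter> {y \<in> j. y < x} = {}"
      using B(7) by blast
  qed
  also have "\<dots> = rk e x + (\<Sum>f\<in>M-{e}. rk f x)" using B e by (simp add: sum.remove)
  also have "(\<Sum>f\<in>M-{e}. rk f x) = (\<Sum>f\<in>M-{e}. Cs c ?g + (if bf e f ?g then c ! ?g else 0))"
    by (rule sum.cong) (use rk_other[OF g e _ _ x] in auto)
  also have "\<dots> = (k - 1) * Cs c ?g + c ! ?g * pe M e ?g"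
    using B e by (simp add: sum.distrib sum_if_const pe_def)
  finally have eq: "x - 1 = ?q + ((k - 1) * Cs c ?g + c ! ?g * pe M e ?g)" .
  have kp: "1 \<le> k" using k_pos[OF g e] .
  then obtain k' where k': "k = Suc k'" by (cases k) auto
  have x1: "1 \<le> x" using xr by simp
  have "x = 1 + (?q + (k' * Cs c ?g + c ! ?g * pe M e ?g))" using eq x1 k' by simp
  moreover obtain t where t: "?q = Cs c ?g + t" using A le_Suc_ex by blast
  moreover have "Fp (pe M e) ?q = k * Cs c ?g + c ! ?g * pe M e ?g + (?q - Cs c ?g) + 1"
    by (simp add: Fp_def)
  ultimately show ?thesis using k' by (simp add: algebra_simps)
qed

lemma pe_lt: "good M \<Longrightarrow> e \<in> M \<Longrightarrow> pe M e g < k"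
proof -
  assume g: "good M" "e \<in> M"
  note B = good_basic[OF g(1)]
  have "pe M e g \<le> card (M - {e})" unfolding pe_def using B by (intro card_mono) auto
  also have "\<dots> = k - 1" using B g by simp
  finally show ?thesis using k_pos[OF g] by simp
qed

lemma edge_repr:
  assumes g: "good M" and e: "e \<in> M"
  shows "e = Fp (pe M e) ` {..<r}"
proof
  note B = good_basic[OF g]
  have fe: "finite e" using B e by auto
  show "e \<subseteq> Fp (pe M e) ` {..<r}"
  proof
    fix x assume x: "x \<in> e"
    have "rk e x < r" using rk_less_card[OF fe x] B e by simp
    then show "x \<in> Fp (pe M e) ` {..<r}" using xform[OF g e x] by blast
  qed
  show "Fp (pe M e) ` {..<r} \<subseteq> e"
  proof
    fix y assume "y \<in> Fp (pe M e) ` {..<r}"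
    then obtain q where q: "q < r" "y = Fp (pe M e) q" by auto
    have "q \<in> rk e ` e" using rk_image_all[OF fe] B e q by simp
    then obtain x where "x \<in> e" "q = rk e x" by auto
    then show "y \<in> e" using xform[OF g e] q by metis
  qed
qed

lemma ow_cases: "ow e f = oP \<or> ow e f = oQ" by (simp add: ow_def)

lemma pe_rel:
  assumes g: "good M" and e: "e \<in> M" and gl: "g < length c"
  shows "pe M e g = pos g (mM M e) (pe M e j)"
proof -
  note B = good_basic[OF g]
  have fM: "finite (M - {e})" using B by simp
  have cM: "card (M - {e}) = k - 1" using B e by simp
  show ?thesis
  proof (cases "inD g")
    case False
    then have og: "\<And>f. ow e f ! g = oP ! g" using ow_cases unfolding inD_def by metis
    show ?thesis
    proof (cases "oP ! g")
      case True
      then show ?thesis using False og unfolding pe_def pos_def mM_def bf_def by simp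
    next
      case F: False
      have "pe M e g = card {f \<in> M - {e}. \<not> Min f < Min e}"
        unfolding pe_def bf_def using og F by simp
      also have "\<dots> = k - 1 - mM M e" unfolding mM_def using card_filter_not[OF fM] cM by simp
      finally show ?thesis using False F by (simp add: pos_def)
    qed
  next
    case True
    have og: "\<And>f. ow e f ! g = (ow e f ! j \<longleftrightarrow> (oP ! g \<longleftrightarrow> oP ! j))"
      using ow_cases True jD unfolding inD_def by (metis (full_types))
    then have bg: "\<And>f. bf e f g = (bf e f j \<longleftrightarrow> (oP ! g \<longleftrightarrow> oP ! j))" unfolding bf_def by metis
    show ?thesis
    proof (cases "oP ! g = oP ! j")
      case True
      then show ?thesis using \<open>inD g\<close> bg unfolding pe_def pos_def by simp
    next
      case F: False
      have "pe M e g = card {f \<in> M - {e}. \<not> bf e f j}"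
        unfolding pe_def using bg F by simp
      also have "\<dots> = k - 1 - pe M e j" unfolding pe_def using card_filter_not[OF fM] cM by simp
      finally show ?thesis using \<open>inD g\<close> F by (simp add: pos_def)
    qed
  qed
qed

lemma mM_strict:
  assumes g: "good M" and e: "e \<in> M" "e' \<in> M" and lt: "Min e < Min e'"
  shows "mM M e < mM M e'"
  unfolding mM_def
proof (rule psubset_card_mono)
  show "finite {f \<in> M - {e'}. Min f < Min e'}" using good_basic[OF g] by simp
  show "{f \<in> M - {e}. Min f < Min e} \<subset> {f \<in> M - {e'}. Min f < Min e'}"
  proof
    show "{f \<in> M - {e}. Min f < Min e} \<subseteq> {f \<in> M - {e'}. Min f < Min e'}" using lt by auto
    have "e \<in> {f \<in> M - {e'}. Min f < Min e'}" using e lt by auto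
    moreover have "e \<notin> {f \<in> M - {e}. Min f < Min e}" by simp
    ultimately show "{f \<in> M - {e}. Min f < Min e} \<noteq> {f \<in> M - {e'}. Min f < Min e'}" by blast
  qed
qed

lemma mM_inj: "good M \<Longrightarrow> inj_on (mM M) M"
proof (rule inj_onI, rule ccontr)
  fix e e' assume g: "good M" and e: "e \<in> M" "e' \<in> M" "mM M e = mM M e'" "e \<noteq> e'"
  then have "Min e \<noteq> Min e'" using Min_ne by blast
  then consider "Min e < Min e'" | "Min e' < Min e" by linarith
  then show False using mM_strict[OF g] e by (cases) (fastforce+)
qed

lemma mM_lt: "good M \<Longrightarrow> e \<in> M \<Longrightarrow> mM M e < k"
proof -
  assume g: "good M" "e \<in> M"
  note B = good_basic[OF g(1)]
  have "mM M e \<le> card (M - {e})" unfolding mM_def using B by (intro card_mono) auto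
  also have "\<dots> = k - 1" using B g by simp
  finally show ?thesis using k_pos[OF g] by simp
qed

lemma bij_from_inj:
  assumes "inj_on h M" "finite M" "card M = k" "\<And>e. e \<in> M \<Longrightarrow> h e < k"
  shows "bij_betw h M {..<k}"
proof -
  have "h ` M \<subseteq> {..<k}" using assms by auto
  moreover have "card (h ` M) = k" using assms by (simp add: card_image)
  ultimately have "h ` M = {..<k}" by (intro card_subset_eq) auto
  then show ?thesis using assms unfolding bij_betw_def by simp
qed

lemma mM_bij: "good M \<Longrightarrow> bij_betw (mM M) M {..<k}"
  using bij_from_inj mM_inj mM_lt good_basic by metis

lemma pj_inj: "good M \<Longrightarrow> inj_on (\<lambda>e. pe M e j) M"
proof (rule inj_onI)
  fix e e' assume g: "good M" and e: "e \<in> M" "e' \<in> M" and eq: "pe M e j = pe M e' j"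
  have jr: "Cs c j < r"
  proof -
    have "Cs c (Suc j) \<le> r" using jlt by (intro Cs_le_r) simp
    then show ?thesis using Cs_Suc[OF jlt] cg_pos[OF jlt] by simp
  qed
  have Gj: "G c (Cs c j) = j" using G_eq[OF jlt] cg_pos[OF jlt] by simp
  have "Fp (pe M e) (Cs c j) = Fp (pe M e') (Cs c j)" unfolding Fp_def Gj eq ..
  moreover have "Fp (pe M e) (Cs c j) \<in> e" using edge_repr[OF g e(1)] jr by blast
  moreover have "Fp (pe M e') (Cs c j) \<in> e'" using edge_repr[OF g e(2)] jr by blast
  ultimately show "e = e'" using good_basic(7)[OF g e] by auto
qed

lemma pj_bij: "good M \<Longrightarrow> bij_betw (\<lambda>e. pe M e j) M {..<k}"
  using bij_from_inj[of "\<lambda>e. pe M e j" M] pj_inj pe_lt good_basic by metis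

definition Phi :: "nat set set \<Rightarrow> nat \<Rightarrow> nat" where
  "Phi M = (\<lambda>a. if a < k then pe M (inv_into M (mM M) a) j else a)"

lemma Phi_perm: "good M \<Longrightarrow> Phi M permutes {..<k}"
proof -
  assume g: "good M"
  have "bij_betw ((\<lambda>e. pe M e j) \<circ> inv_into M (mM M)) {..<k} {..<k}"
    using bij_betw_trans[OF bij_betw_inv_into[OF mM_bij[OF g]] pj_bij[OF g]] .
  then have "bij_betw (Phi M) {..<k} {..<k}"
    by (rule bij_betw_cong[THEN iffD1, rotated]) (simp add: Phi_def)
  then show ?thesis by (rule bij_imp_permutes) (simp add: Phi_def)
qed

lemma Edge_repr2:
  assumes g: "good M" and e: "e \<in> M"
  shows "Edge (mM M e) (pe M e j) = e"
proof -
  have "Edge (mM M e) (pe M e j) = Fp (pe M e) ` {..<r}"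
    unfolding Edge_def
  proof (rule image_cong[OF refl])
    fix q assume "q \<in> {..<r}"
    then have "G c q < length c" using Gq by simp
    then show "Fp (\<lambda>g. pos g (mM M e) (pe M e j)) q = Fp (pe M e) q"
      unfolding Fp_def using pe_rel[OF g e] by simp
  qed
  then show ?thesis using edge_repr[OF g e] by simp
qed

lemma Psi_Phi: "good M \<Longrightarrow> Psi (Phi M) = M"
proof -
  assume g: "good M"
  note bij = mM_bij[OF g]
  show ?thesis
  proof
    show "Psi (Phi M) \<subseteq> M"
    proof
      fix e assume "e \<in> Psi (Phi M)"
      then obtain a where a: "a < k" "e = Edge a (Phi M a)" by (auto simp: Psi_def)
      let ?e = "inv_into M (mM M) a"
      have em: "?e \<in> M" using bij a by (meson bij_betw_apply bij_betw_inv_into lessThan_iff)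
      have "mM M ?e = a" using bij a by (meson bij_betw_inv_into_right lessThan_iff)
      then have "e = Edge (mM M ?e) (pe M ?e j)" using a by (simp add: Phi_def)
      then show "e \<in> M" using Edge_repr2[OF g em] em by simp
    qed
    show "M \<subseteq> Psi (Phi M)"
    proof
      fix e assume e: "e \<in> M"
      let ?a = "mM M e"
      have a: "?a < k" using mM_lt[OF g e] .
      have "inv_into M (mM M) ?a = e" using bij e by (simp add: bij_betw_inv_into_left)
      then have "Edge ?a (Phi M ?a) = e" using Edge_repr2[OF g e] a by (simp add: Phi_def)
      then show "e \<in> Psi (Phi M)" using a unfolding Psi_def by force
    qed
  qed
qed

lemma count_good: "card {M. good M} = fact k"
proof -
  let ?S = "{M. good M}" and ?Pm = "{\<pi>. \<pi> permutes {..<k}}"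
  have cP: "card ?Pm = fact k" using card_permutations[of "{..<k}" k] by simp
  have fP: "finite ?Pm" using finite_permutations[of "{..<k}"] by simp
  have fS: "finite ?S"
  proof (rule finite_subset)
    show "?S \<subseteq> Pow (Pow {1..r*k})" using good_basic(3) by blast
  qed simp
  have "card ?S \<le> card ?Pm"
  proof (rule card_inj_on_le[OF _ _ fP])
    show "inj_on Phi ?S" by (rule inj_onI) (metis Psi_Phi mem_Collect_eq)
    show "Phi ` ?S \<subseteq> ?Pm" using Phi_perm by auto
  qed
  moreover have "card ?Pm \<le> card ?S"
  proof (rule card_inj_on_le[OF Psi_inj _ fS])
    show "Psi ` ?Pm \<subseteq> ?S" using Psi_good by (auto simp: good_def)
  qed
  ultimately show ?thesis using cP by simp
qed

end

lemma hd_W: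
  assumes "length os = length c" "c \<noteq> []" "1 \<le> c ! 0"
  shows "hd (W os c) = os ! 0"
proof -
  obtain t c' where c: "c = t # c'" using assms(2) by (cases c) auto
  obtain b os' where os: "os = b # os'" using assms(1) c by (cases os) auto
  have "1 \<le> t" using assms(3) c by simp
  then show ?thesis using c os by (simp add: W_Cons block_def)
qed

theorem mainTheorem10:
  fixes r k :: nat and P Q :: "bool list"
  assumes "r \<ge> 2" and "harmonious r P Q" and "k \<ge> 1"
  shows "card {M. ordered_matching r k M \<and> is_clique {P, Q} M} = fact k"
proof -
  from assms(2) obtain c where hP: "has_composition P c" and hQ: "has_composition Q c"
    and cP: "collectable r P" and PQ: "P \<noteq> Q"
    unfolding harmonious_def by blast
  from hP obtain oP where cpos: "\<forall>t\<in>set c. 1 \<le> t" and lP: "length oP = length c"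
    and P: "P = W oP c" unfolding has_composition_def W_def by blast
  from hQ obtain oQ where lQ: "length oQ = length c" and Q: "Q = W oQ c"
    unfolding has_composition_def W_def by blast
  have ip: "is_pattern r P" using cP by (simp add: collectable_def)
  have ip2: "is_pattern r Q" using assms(2) by (simp add: harmonious_def collectable_def)
  have sumc: "sum_list c = r" using ip length_W[OF lP] P by (simp add: is_pattern_def)
  have "oP \<noteq> oQ" using PQ P Q by auto
  have "\<exists>j. j < length c \<and> oP ! j \<noteq> oQ ! j"
  proof (rule ccontr)
    assume "\<not> (\<exists>j. j < length c \<and> oP ! j \<noteq> oQ ! j)"
    then have "oP = oQ" using lP lQ by (intro nth_equalityI) auto
    then show False using \<open>oP \<noteq> oQ\<close> by simp
  qed
  then obtain j where j: "j < length c" "oP ! j \<noteq> oQ ! j" by blast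
  have cne: "c \<noteq> []" using j by auto
  have c0: "1 \<le> c ! 0" using cpos cne by simp
  have oP0: "oP ! 0 = True" using hd_W[OF lP cne c0] ip P by (simp add: is_pattern_def)
  have oQ0: "oQ ! 0 = True" using hd_W[OF lQ cne c0] ip2 Q by (simp add: is_pattern_def)
  interpret harm r k c oP oQ j
    using lP lQ cpos sumc j oP0 oQ0 by unfold_locales auto
  have "{M. ordered_matching r k M \<and> is_clique {P, Q} M} = {M. good M}"
    unfolding good_def P Q ..
  then show ?thesis using count_good by simp
qed

end
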